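(* Let $D$ be a strongly connected orientation of $G^\circ$ (the graph $G$ with its bridges deleted) and let $v^D\in H$ be the unique flow with $2\langle v^D,x^C\rangle=q(x^C)$ for every circuit $C\subseteq D$. Then $2\,q(v^D)=\sum_{e\in D}v^D_e$.
   Context: $G=(V,E)$ is a finite connected graph, possibly with parallel edges and loops; $\mathbb E$ is the set of oriented edges ($e$ and its reverse $\bar e$). Real $1$-chains $x:\mathbb E\to\mathbb R$ satisfy $x_{\bar e}=-x_e$; $\langle x,y\rangle=\sum_{e\in E}x_ey_e$, $q(x)=\langle x,x\rangle$. A flow satisfies $\sum_{e\text{ with tail }v}x_e=0$ at every vertex $v$; $H$ is the space of real flows. A circuit is an orientation of a cycle as a directed cycle; $x^C_e=1$ if $e\in C$, $-1$ if $\bar e\in C$, $0$ otherwise. An orientation (a set of oriented edges with exactly one of $e,\bar e$ per edge) is strongly connected if on each connected component any two vertices are joined by directed paths in both directions. *)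

theory Defs
  imports Complex_Main
begin

text \<open>A finite multigraph is given by a vertex set V, an edge set E and endpoint maps
  src, tgt (loops: src e = tgt e; parallel edges: distinct edges with equal endpoints).
  An oriented edge is a pair (e, b): (e, True) is e, (e, False) is its reverse.\<close>

type_synonym 'e oedge = "'e \<times> bool"

definition otail :: "('e \<Rightarrow> 'v) \<Rightarrow> ('e \<Rightarrow> 'v) \<Rightarrow> 'e oedge \<Rightarrow> 'v" where
  "otail src tgt a = (if snd a then src (fst a) else tgt (fst a))"

definition ohead :: "('e \<Rightarrow> 'v) \<Rightarrow> ('e \<Rightarrow> 'v) \<Rightarrow> 'e oedge \<Rightarrow> 'v" where
  "ohead src tgt a = (if snd a then tgt (fst a) else src (fst a))"

definition orev :: "'e oedge \<Rightarrow> 'e oedge" where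
  "orev a = (fst a, \<not> snd a)"

definition oedges :: "'e set \<Rightarrow> 'e oedge set" where
  "oedges E = E \<times> UNIV"

definition is_chain :: "'e set \<Rightarrow> ('e oedge \<Rightarrow> real) \<Rightarrow> bool" where
  "is_chain E x \<longleftrightarrow> (\<forall>a \<in> oedges E. x (orev a) = - x a)"

definition inner_ch :: "'e set \<Rightarrow> ('e oedge \<Rightarrow> real) \<Rightarrow> ('e oedge \<Rightarrow> real) \<Rightarrow> real" where
  "inner_ch E x y = (\<Sum>e\<in>E. x (e, True) * y (e, True))"

definition qf :: "'e set \<Rightarrow> ('e oedge \<Rightarrow> real) \<Rightarrow> real" where
  "qf E x = inner_ch E x x"

definition is_flow :: "'v set \<Rightarrow> 'e set \<Rightarrow> ('e \<Rightarrow> 'v) \<Rightarrow> ('e \<Rightarrow> 'v) \<Rightarrow> ('e oedge \<Rightarrow> real) \<Rightarrow> bool" where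
  "is_flow V E src tgt x \<longleftrightarrow> is_chain E x \<and>
     (\<forall>v \<in> V. (\<Sum>a \<in> {a \<in> oedges E. otail src tgt a = v}. x a) = 0)"

definition uadj :: "'e set \<Rightarrow> ('e \<Rightarrow> 'v) \<Rightarrow> ('e \<Rightarrow> 'v) \<Rightarrow> ('v \<times> 'v) set" where
  "uadj E src tgt = {(src e, tgt e) | e. e \<in> E} \<union> {(tgt e, src e) | e. e \<in> E}"

definition connected_graph :: "'v set \<Rightarrow> 'e set \<Rightarrow> ('e \<Rightarrow> 'v) \<Rightarrow> ('e \<Rightarrow> 'v) \<Rightarrow> bool" where
  "connected_graph V E src tgt \<longleftrightarrow> (\<forall>u \<in> V. \<forall>w \<in> V. (u, w) \<in> (uadj E src tgt)\<^sup>*)"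

definition bridges :: "'v set \<Rightarrow> 'e set \<Rightarrow> ('e \<Rightarrow> 'v) \<Rightarrow> ('e \<Rightarrow> 'v) \<Rightarrow> 'e set" where
  "bridges V E src tgt = {e \<in> E. \<not> connected_graph V (E - {e}) src tgt}"

definition dadj :: "('e \<Rightarrow> 'v) \<Rightarrow> ('e \<Rightarrow> 'v) \<Rightarrow> 'e oedge set \<Rightarrow> ('v \<times> 'v) set" where
  "dadj src tgt D = {(otail src tgt a, ohead src tgt a) | a. a \<in> D}"

definition is_orientation :: "'e set \<Rightarrow> 'e oedge set \<Rightarrow> bool" where
  "is_orientation E D \<longleftrightarrow> D \<subseteq> oedges E \<and> (\<forall>e \<in> E. ((e, True) \<in> D) \<noteq> ((e, False) \<in> D))"

text \<open>Strongly connected orientation of the graph (V, E): within each connected component,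
  any two vertices are joined by directed paths (in both directions, by symmetry of
  undirected reachability).\<close>
definition strongly_connected_orientation ::
  "'v set \<Rightarrow> 'e set \<Rightarrow> ('e \<Rightarrow> 'v) \<Rightarrow> ('e \<Rightarrow> 'v) \<Rightarrow> 'e oedge set \<Rightarrow> bool" where
  "strongly_connected_orientation V E src tgt D \<longleftrightarrow> is_orientation E D \<and>
     (\<forall>u \<in> V. \<forall>w \<in> V. (u, w) \<in> (uadj E src tgt)\<^sup>* \<longrightarrow> (u, w) \<in> (dadj src tgt D)\<^sup>*)"

text \<open>A circuit: a cycle oriented as a directed cycle, given as a nonempty cyclic list of
  oriented edges with distinct underlying edges and distinct vertices.\<close>
definition is_circuit_list :: "'e set \<Rightarrow> ('e \<Rightarrow> 'v) \<Rightarrow> ('e \<Rightarrow> 'v) \<Rightarrow> 'e oedge list \<Rightarrow> bool" where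
  "is_circuit_list E src tgt cs \<longleftrightarrow> cs \<noteq> [] \<and> set cs \<subseteq> oedges E \<and>
     distinct (map fst cs) \<and> distinct (map (otail src tgt) cs) \<and>
     (\<forall>i < length cs. ohead src tgt (cs ! i) = otail src tgt (cs ! ((i + 1) mod length cs)))"

definition is_circuit :: "'e set \<Rightarrow> ('e \<Rightarrow> 'v) \<Rightarrow> ('e \<Rightarrow> 'v) \<Rightarrow> 'e oedge set \<Rightarrow> bool" where
  "is_circuit E src tgt C \<longleftrightarrow> (\<exists>cs. is_circuit_list E src tgt cs \<and> C = set cs)"

definition circ_chain :: "'e oedge set \<Rightarrow> 'e oedge \<Rightarrow> real" where
  "circ_chain C a = (if a \<in> C then 1 else if orev a \<in> C then -1 else 0)"

end

theory Submission
  imports Defs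
begin

fun walk :: "('e \<Rightarrow> 'v) \<Rightarrow> ('e \<Rightarrow> 'v) \<Rightarrow> 'e oedge set \<Rightarrow> 'v \<Rightarrow> 'e oedge list \<Rightarrow> 'v \<Rightarrow> bool" where
  "walk s t D x [] y = (x = y)"
| "walk s t D x (a # ws) y = (a \<in> D \<and> otail s t a = x \<and> walk s t D (ohead s t a) ws y)"

lemma walk_append: "walk s t D x (A @ B) y \<longleftrightarrow> (\<exists>z. walk s t D x A z \<and> walk s t D z B y)"
  by (induction A arbitrary: x) auto

lemma walk_nth: "walk s t D x ws y \<Longrightarrow> i + 1 < length ws \<Longrightarrow>
   ohead s t (ws ! i) = otail s t (ws ! (i + 1))"
proof (induction ws arbitrary: x i)
  case Nil then show ?case by simp
next
  case (Cons a ws)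
  show ?case
  proof (cases i)
    case 0 then show ?thesis using Cons by (cases ws) auto
  next
    case (Suc j) then show ?thesis using Cons by auto
  qed
qed

lemma walk_last: "walk s t D x ws y \<Longrightarrow> ws \<noteq> [] \<Longrightarrow> ohead s t (last ws) = y"
proof (induction ws arbitrary: x)
  case Nil then show ?case by simp
next
  case (Cons a ws) then show ?case by (cases ws) auto
qed

lemma walk_first: "walk s t D x ws y \<Longrightarrow> ws \<noteq> [] \<Longrightarrow> otail s t (ws ! 0) = x"
  by (cases ws) auto

lemma walk_set: "walk s t D x ws y \<Longrightarrow> set ws \<subseteq> D"
  by (induction ws arbitrary: x) auto

lemma closed_walk_sum:
  assumes H: "\<And>ws x. ws \<noteq> [] \<Longrightarrow> walk s t D x ws x \<Longrightarrow> distinct (map (otail s t) ws) \<Longrightarrow>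
        sum_list (map g ws) = (0::real)"
  shows "walk s t D x ws x \<Longrightarrow> sum_list (map g ws) = 0"
proof (induction "length ws" arbitrary: ws x rule: less_induct)
  case less
  show ?case
  proof (cases "ws = [] \<or> distinct (map (otail s t) ws)")
    case True
    show ?thesis
    proof (cases "ws = []")
      case True then show ?thesis by simp
    next
      case False then show ?thesis using H[OF False less.prems] \<open>ws = [] \<or> _\<close> by simp
    qed
  next
    case False
    then have ne: "ws \<noteq> []" and nd: "\<not> distinct (map (otail s t) ws)" by auto
    obtain i0 j0 where i0: "i0 < length ws" "j0 < length ws" "i0 \<noteq> j0"
       "otail s t (ws ! i0) = otail s t (ws ! j0)"
      using nd unfolding distinct_conv_nth by auto
    obtain i j where ij: "i < j" "j < length ws" "otail s t (ws ! i) = otail s t (ws ! j)"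
    proof (cases "i0 < j0")
      case True then show ?thesis using that i0 by blast
    next
      case False then have "j0 < i0" using i0(3) by simp
      then show ?thesis using that i0 by (metis)
    qed
    define A where "A = take i ws"
    define B where "B = take (j - i) (drop i ws)"
    define C where "C = drop j ws"
    have ws: "ws = A @ B @ C" unfolding A_def B_def C_def
    proof -
      have "drop j ws = drop (j - i) (drop i ws)" using ij by simp
      then show "ws = take i ws @ take (j - i) (drop i ws) @ drop j ws"
        by (metis append_take_drop_id)
    qed
    have lB: "length B = j - i" and lC: "length C = length ws - j"
      using ij unfolding B_def C_def by auto
    obtain z1 z2 where w1: "walk s t D x A z1" and w2: "walk s t D z1 B z2" and w3: "walk s t D z2 C x"
      using less.prems ws walk_append by metis
    have B0: "B ! 0 = ws ! i" unfolding B_def using ij by auto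
    have C0: "C ! 0 = ws ! j" unfolding C_def using ij by auto
    have "z1 = z2" using walk_first[OF w2] walk_first[OF w3] B0 C0 ij lB lC by force
    then have wB: "walk s t D z1 B z1" and wCA: "walk s t D z1 (C @ A) z1"
      using w1 w2 w3 walk_append by metis+
    have lA: "length A = i" unfolding A_def using ij by simp
    have "length B < length ws" using lB ij by simp
    then have "sum_list (map g B) = 0" using less.hyps wB by blast
    moreover have "length (C @ A) < length ws" using lA lC ij by simp
    then have "sum_list (map g (C @ A)) = 0" using less.hyps wCA by blast
    ultimately show ?thesis using ws by simp
  qed
qed


lemma rtrancl_walk:
  assumes "(x, y) \<in> (dadj s t D)\<^sup>*"
  shows "\<exists>ws. walk s t D x ws y"
  using assms
proof (induction rule: rtrancl_induct)
  case base
  then show ?case by (metis walk.simps(1))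
next
  case (step y z)
  then obtain ws where w: "walk s t D x ws y" by blast
  from step(2) obtain a where a: "a \<in> D" "otail s t a = y" "ohead s t a = z"
    unfolding dadj_def by auto
  have "walk s t D y [a] z" using a by simp
  then have "walk s t D x (ws @ [a]) z" using w walk_append by metis
  then show ?case by blast
qed

lemma potential_exists:
  assumes CW: "\<And>ws x. walk s t D x ws x \<Longrightarrow> sum_list (map g ws) = (0::real)"
    and MR: "\<And>a. a \<in> D \<Longrightarrow> (ohead s t a, otail s t a) \<in> (dadj s t D)\<^sup>*"
  shows "\<exists>p. \<forall>a\<in>D. g a = p (ohead s t a) - p (otail s t a)"
proof -
  let ?R = "(dadj s t D)\<^sup>*"
  define cls where "cls w = {r. (r, w) \<in> ?R \<and> (w, r) \<in> ?R}" for w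
  define rep where "rep w = (SOME r. r \<in> cls w)" for w
  have rep: "rep w \<in> cls w" for w
    unfolding rep_def by (rule someI[of _ w]) (simp add: cls_def)
  define pw where "pw w = (SOME ws. walk s t D (rep w) ws w)" for w
  have pw: "walk s t D (rep w) (pw w) w" for w
  proof -
    have "(rep w, w) \<in> ?R" using rep[of w] unfolding cls_def by auto
    then obtain ws where "walk s t D (rep w) ws w" using rtrancl_walk by metis
    then show ?thesis unfolding pw_def by (rule someI)
  qed
  define p where "p w = sum_list (map g (pw w))" for w
  have "g a = p (ohead s t a) - p (otail s t a)" if a: "a \<in> D" for a
  proof -
    let ?h = "ohead s t a" and ?t = "otail s t a"
    have "(?t, ?h) \<in> dadj s t D" using a unfolding dadj_def by blast
    then have th: "(?t, ?h) \<in> ?R" by (rule r_into_rtrancl)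
    have ht: "(?h, ?t) \<in> ?R" using MR[OF a] .
    have "cls ?t = cls ?h" unfolding cls_def
    proof (intro set_eqI iffI; simp)
      fix r assume "(r, ?t) \<in> ?R \<and> (?t, r) \<in> ?R"
      then show "(r, ?h) \<in> ?R \<and> (?h, r) \<in> ?R"
        using th ht rtrancl_trans by metis
    next
      fix r assume "(r, ?h) \<in> ?R \<and> (?h, r) \<in> ?R"
      then show "(r, ?t) \<in> ?R \<and> (?t, r) \<in> ?R"
        using th ht rtrancl_trans by metis
    qed
    then have rr: "rep ?t = rep ?h" unfolding rep_def by simp
    define r where "r = rep ?h"
    have wP: "walk s t D r (pw ?t) ?t" using pw[of ?t] rr r_def by simp
    have wQ: "walk s t D r (pw ?h) ?h" using pw[of ?h] r_def by simp
    have "(?h, r) \<in> ?R" using rep[of ?h] unfolding cls_def r_def by auto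
    then obtain W where wW: "walk s t D ?h W r" using rtrancl_walk by metis
    have wa: "walk s t D ?t [a] ?h" using a by simp
    have c1: "walk s t D r (pw ?t @ [a] @ W) r" using wP wa wW walk_append by metis
    have c2: "walk s t D r (pw ?h @ W) r" using wQ wW walk_append by metis
    have "sum_list (map g (pw ?t)) + g a + sum_list (map g W) = 0" using CW[OF c1] by simp
    moreover have "sum_list (map g (pw ?h)) + sum_list (map g W) = 0" using CW[OF c2] by simp
    ultimately show ?thesis unfolding p_def by linarith
  qed
  then show ?thesis by blast
qed


lemma flow_dp:
  assumes finV: "finite V" and finE: "finite E"
    and ends: "\<forall>e\<in>E. src e \<in> V \<and> tgt e \<in> V" and fl: "is_flow V E src tgt v"
  shows "(\<Sum>e\<in>E. v (e, True) * (p (tgt e) - p (src e))) = 0"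
proof -
  have fO: "finite (oedges E)" unfolding oedges_def using finE by simp
  have img: "otail src tgt ` oedges E \<subseteq> V" using ends by (auto simp: oedges_def otail_def)
  have ch: "v (e, False) = - v (e, True)" if "e \<in> E" for e
  proof -
    have "(e, True) \<in> oedges E" using that by (simp add: oedges_def)
    then have "v (orev (e, True)) = - v (e, True)" using fl by (simp add: is_flow_def is_chain_def)
    then show ?thesis by (simp add: orev_def)
  qed
  have "0 = (\<Sum>w\<in>V. p w * (\<Sum>a\<in>{a\<in>oedges E. otail src tgt a = w}. v a))"
    using fl by (simp add: is_flow_def)
  also have "\<dots> = (\<Sum>w\<in>V. \<Sum>a\<in>{a\<in>oedges E. otail src tgt a = w}. p (otail src tgt a) * v a)"
    by (rule sum.cong) (auto simp: sum_distrib_left)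
  also have "\<dots> = (\<Sum>a\<in>oedges E. p (otail src tgt a) * v a)"
    by (rule sum.group[OF fO finV img])
  also have "\<dots> = (\<Sum>e\<in>E. \<Sum>b\<in>UNIV. p (otail src tgt (e, b)) * v (e, b))"
    by (simp add: oedges_def sum.cartesian_product)
  also have "\<dots> = (\<Sum>e\<in>E. - (v (e, True) * (p (tgt e) - p (src e))))"
    by (rule sum.cong) (simp_all add: UNIV_bool otail_def ch algebra_simps)
  finally show ?thesis by (simp add: sum_negf)
qed

lemma bridge_zero:
  assumes finV: "finite V" and finE: "finite E"
    and ends: "\<forall>e\<in>E. src e \<in> V \<and> tgt e \<in> V" and fl: "is_flow V E src tgt v"
    and conn: "connected_graph V E src tgt"
    and eb: "e \<in> bridges V E src tgt"
  shows "v (e, True) = 0"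
proof -
  define E' where "E' = E - {e}"
  define U where "U = uadj E' src tgt"
  have eE: "e \<in> E" and nc: "\<not> connected_graph V E' src tgt"
    using eb unfolding bridges_def E'_def by auto
  have notin: "(src e, tgt e) \<notin> U\<^sup>*"
  proof
    assume h: "(src e, tgt e) \<in> U\<^sup>*"
    have "sym U" unfolding U_def uadj_def sym_def by blast
    then have "sym (U\<^sup>*)" by (rule sym_rtrancl)
    then have h2: "(tgt e, src e) \<in> U\<^sup>*" using h unfolding sym_def by blast
    have "uadj E src tgt \<subseteq> U\<^sup>*"
    proof
      fix pr assume "pr \<in> uadj E src tgt"
      then obtain e' where e': "e' \<in> E" "pr = (src e', tgt e') \<or> pr = (tgt e', src e')"
        unfolding uadj_def by blast
      show "pr \<in> U\<^sup>*"
      proof (cases "e' = e")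
        case True then show ?thesis using e' h h2 by auto
      next
        case False
        then have "pr \<in> U" using e' unfolding U_def uadj_def E'_def by blast
        then show ?thesis by blast
      qed
    qed
    then have "(uadj E src tgt)\<^sup>* \<subseteq> U\<^sup>*" by (rule rtrancl_subset_rtrancl)
    then have "connected_graph V E' src tgt" using conn
      unfolding connected_graph_def U_def by blast
    then show False using nc by simp
  qed
  define S where "S = {w\<in>V. (src e, w) \<in> U\<^sup>*}"
  define T where "T = {a\<in>oedges E. otail src tgt a \<in> S}"
  have fO: "finite (oedges E)" unfolding oedges_def using finE by simp
  have fS: "finite S" unfolding S_def using finV by simp
  have fT: "finite T" unfolding T_def using fO by simp
  have srcS: "src e \<in> S" unfolding S_def using ends eE by auto
  have tgtS: "tgt e \<notin> S" unfolding S_def using notin by auto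
  have "0 = (\<Sum>w\<in>S. \<Sum>a\<in>{a\<in>oedges E. otail src tgt a = w}. v a)"
    using fl unfolding is_flow_def S_def by simp
  also have "\<dots> = (\<Sum>w\<in>S. \<Sum>a\<in>{a\<in>T. otail src tgt a = w}. v a)"
  proof (rule sum.cong[OF refl])
    fix x assume "x \<in> S"
    then have "{a\<in>oedges E. otail src tgt a = x} = {a\<in>T. otail src tgt a = x}"
      unfolding T_def by auto
    then show "(\<Sum>a\<in>{a\<in>oedges E. otail src tgt a = x}. v a) = (\<Sum>a\<in>{a\<in>T. otail src tgt a = x}. v a)"
      by simp
  qed
  also have "\<dots> = (\<Sum>a\<in>T. v a)"
    by (rule sum.group[OF fT fS]) (auto simp: T_def)
  finally have sT: "(\<Sum>a\<in>T. v a) = 0" by simp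
  define T2 where "T2 = {a\<in>T. ohead src tgt a \<in> S}"
  have Tsplit: "T = insert (e, True) T2"
  proof (intro set_eqI iffI)
    fix a assume aT: "a \<in> T"
    obtain e' b where a: "a = (e', b)" by (cases a)
    show "a \<in> insert (e, True) T2"
    proof (cases "e' = e")
      case True
      then show ?thesis using aT a tgtS unfolding T_def otail_def by (cases b) auto
    next
      case False
      have e'E: "e' \<in> E" using aT a unfolding T_def oedges_def by auto
      have "(otail src tgt a, ohead src tgt a) \<in> U"
        using False e'E a unfolding U_def uadj_def E'_def otail_def ohead_def by (cases b) auto
      moreover have "ohead src tgt a \<in> V" using e'E ends a unfolding ohead_def by auto
      ultimately have "ohead src tgt a \<in> S" using aT unfolding T_def S_def
        by (auto intro: rtrancl_into_rtrancl)
      then show ?thesis using aT unfolding T2_def by auto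
    qed
  next
    fix a assume "a \<in> insert (e, True) T2"
    then show "a \<in> T" using srcS eE unfolding T2_def T_def oedges_def otail_def by auto
  qed
  have nT2: "(e, True) \<notin> T2" using tgtS unfolding T2_def ohead_def by auto
  have orevT2: "orev ` T2 = T2"
  proof -
    have sub: "orev a \<in> T2" if "a \<in> T2" for a
      using that unfolding T2_def T_def oedges_def orev_def otail_def ohead_def by auto
    have "orev (orev a) = a" for a by (simp add: orev_def)
    show ?thesis
    proof
      show "orev ` T2 \<subseteq> T2" using sub by auto
      show "T2 \<subseteq> orev ` T2"
      proof
        fix a assume "a \<in> T2"
        then have "orev a \<in> T2" "a = orev (orev a)" using sub by (auto simp: orev_def)
        then show "a \<in> orev ` T2" by blast
      qed
    qed
  qed
  have injo: "inj_on orev T2" by (rule inj_onI) (simp add: orev_def prod_eq_iff)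
  have chv: "v (orev a) = - v a" if "a \<in> T2" for a
    using fl that unfolding is_flow_def is_chain_def T2_def T_def by auto
  have "(\<Sum>a\<in>T2. v a) = (\<Sum>a\<in>orev ` T2. v a)" using orevT2 by simp
  also have "\<dots> = (\<Sum>a\<in>T2. v (orev a))" by (rule sum.reindex[OF injo, unfolded comp_def])
  also have "\<dots> = - (\<Sum>a\<in>T2. v a)" by (simp add: chv sum_negf)
  finally have "(\<Sum>a\<in>T2. v a) = 0" by simp
  moreover have "(\<Sum>a\<in>T. v a) = v (e, True) + (\<Sum>a\<in>T2. v a)"
    unfolding Tsplit using nT2 fT Tsplit by (simp add: sum.insert)
  ultimately show ?thesis using sT by simp
qed

lemma circ_inner:
  assumes finE: "finite E" and CE: "C \<subseteq> oedges E"
    and nb: "\<And>e. \<not> ((e, True) \<in> C \<and> (e, False) \<in> C)"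
    and ch: "\<And>e. e \<in> E \<Longrightarrow> f (e, False) = - f (e, True)"
  shows "inner_ch E f (circ_chain C) = (\<Sum>a\<in>C. f a)"
proof -
  have "finite (oedges E)" unfolding oedges_def using finE by simp
  then have fC: "finite C" using CE by (rule finite_subset[rotated])
  have img: "fst ` C \<subseteq> E" using CE unfolding oedges_def by auto
  have per: "f (e, True) * circ_chain C (e, True) = (\<Sum>a\<in>{a\<in>C. fst a = e}. f a)"
    if eE: "e \<in> E" for e
  proof -
    have "{a\<in>C. fst a = e} = {a \<in> {(e, True), (e, False)}. a \<in> C}"
    proof (intro set_eqI iffI)
      fix a assume "a \<in> {a\<in>C. fst a = e}"
      then show "a \<in> {a \<in> {(e, True), (e, False)}. a \<in> C}"
      proof (cases a)
        case (Pair x b) then show ?thesis using \<open>a \<in> {a\<in>C. fst a = e}\<close> by (cases b) auto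
      qed
    qed auto
    moreover have "(\<Sum>a\<in>{a \<in> {(e, True), (e, False)}. a \<in> C}. f a) = (\<Sum>a\<in>{(e, True), (e, False)}. if a \<in> C then f a else 0)"
      by (rule sum.inter_filter) simp
    ultimately have "(\<Sum>a\<in>{a\<in>C. fst a = e}. f a) = (\<Sum>a\<in>{(e, True), (e, False)}. if a \<in> C then f a else 0)"
      by simp
    also have "\<dots> = (if (e, True) \<in> C then f (e, True) else 0) + (if (e, False) \<in> C then f (e, False) else 0)"
      by simp
    finally show ?thesis using ch[OF eE] nb[of e]
      by (simp add: circ_chain_def orev_def)
  qed
  have "inner_ch E f (circ_chain C) = (\<Sum>e\<in>E. \<Sum>a\<in>{a\<in>C. fst a = e}. f a)"
    unfolding inner_ch_def by (rule sum.cong) (auto simp: per)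
  also have "\<dots> = (\<Sum>a\<in>C. f a)" by (rule sum.group[OF fC finE img])
  finally show ?thesis .
qed


theorem mainTheorem20:
  fixes V :: "'v set" and E :: "'e set" and src tgt :: "'e \<Rightarrow> 'v"
    and D :: "'e oedge set" and vD :: "'e oedge \<Rightarrow> real"
  assumes "finite V" and "finite E" and "V \<noteq> {}"
    and "\<forall>e \<in> E. src e \<in> V \<and> tgt e \<in> V"
    and "connected_graph V E src tgt"
    and "strongly_connected_orientation V (E - bridges V E src tgt) src tgt D"
    and "is_flow V E src tgt vD"
    and "\<forall>C. is_circuit E src tgt C \<and> C \<subseteq> D \<longrightarrow>
           2 * inner_ch E vD (circ_chain C) = qf E (circ_chain C)"
  shows "2 * qf E vD = (\<Sum>a \<in> D. vD a)"
proof -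
  note finV = assms(1) and finE = assms(2) and ends = assms(4) and conn = assms(5)
    and fl = assms(7) and circ = assms(8)
  define B where "B = bridges V E src tgt"
  define E0 where "E0 = E - B"
  have orient: "is_orientation E0 D"
    and sc: "\<forall>u\<in>V. \<forall>w\<in>V. (u, w) \<in> (uadj E0 src tgt)\<^sup>* \<longrightarrow> (u, w) \<in> (dadj src tgt D)\<^sup>*"
    using assms(6) unfolding strongly_connected_orientation_def E0_def B_def by auto
  have DE0: "D \<subseteq> oedges E0" and xo: "\<forall>e\<in>E0. ((e, True) \<in> D) \<noteq> ((e, False) \<in> D)"
    using orient unfolding is_orientation_def by auto
  have E0E: "E0 \<subseteq> E" unfolding E0_def by auto
  have finE0: "finite E0" using finE E0E finite_subset by blast
  have DE: "D \<subseteq> oedges E" using DE0 E0E unfolding oedges_def by auto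
  have finO: "finite (oedges E)" unfolding oedges_def using finE by simp
  have finD: "finite D" using DE finO finite_subset by blast
  have fstD: "fst a \<in> E0" if "a \<in> D" for a using that DE0 unfolding oedges_def by auto
  have dnb: "\<not> ((e, True) \<in> D \<and> (e, False) \<in> D)" for e
    using xo fstD[of "(e, True)"] by auto
  have finj: "a = b" if "a \<in> D" "b \<in> D" "fst a = fst b" for a b
  proof (cases a; cases b)
    fix x p y q assume a: "a = (x, p)" and b: "b = (y, q)"
    then show ?thesis using that dnb[of x] by (cases p; cases q) auto
  qed
  have chv: "vD (e, False) = - vD (e, True)" if "e \<in> E" for e
  proof -
    have "(e, True) \<in> oedges E" using that by (simp add: oedges_def)
    then have "vD (orev (e, True)) = - vD (e, True)" using fl by (simp add: is_flow_def is_chain_def)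
    then show ?thesis by (simp add: orev_def)
  qed
  define g where "g a = 2 * vD a - 1" for a
  have H: "sum_list (map g ws) = 0"
    if ne: "ws \<noteq> []" and w: "walk src tgt D x ws x" and dt: "distinct (map (otail src tgt) ws)" for ws x
  proof -
    have sD: "set ws \<subseteq> D" using walk_set[OF w] .
    have dws: "distinct ws" using dt by (simp add: distinct_map)
    have injf: "inj_on fst (set ws)"
    proof (rule inj_onI)
      fix a b assume "a \<in> set ws" "b \<in> set ws" "fst a = fst b"
      then show "a = b" using sD finj by blast
    qed
    have dfst: "distinct (map fst ws)" using dws injf by (simp add: distinct_map)
    have cyc: "\<forall>i < length ws. ohead src tgt (ws ! i) = otail src tgt (ws ! ((i + 1) mod length ws))"
    proof (intro allI impI)
      fix i assume i: "i < length ws"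
      show "ohead src tgt (ws ! i) = otail src tgt (ws ! ((i + 1) mod length ws))"
      proof (cases "i + 1 < length ws")
        case True then show ?thesis using walk_nth[OF w True] by simp
      next
        case False
        then have i1: "i = length ws - 1" using i by auto
        have "i + 1 = length ws" using False i by auto
        then have m: "(i + 1) mod length ws = 0" by simp
        have "ws ! i = last ws" using i1 ne by (simp add: last_conv_nth)
        then show ?thesis using walk_last[OF w ne] walk_first[OF w ne] m by simp
      qed
    qed
    have "is_circuit_list E src tgt ws"
      unfolding is_circuit_list_def using ne sD DE dfst dt cyc by auto
    then have ic: "is_circuit E src tgt (set ws)" unfolding is_circuit_def by blast
    have CE: "set ws \<subseteq> oedges E" using sD DE by auto
    have nb: "\<not> ((e, True) \<in> set ws \<and> (e, False) \<in> set ws)" for e using dnb[of e] sD by auto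
    have i1: "inner_ch E vD (circ_chain (set ws)) = (\<Sum>a\<in>set ws. vD a)"
      by (rule circ_inner[OF finE CE nb chv])
    have cch: "circ_chain (set ws) (e, False) = - circ_chain (set ws) (e, True)" for e
      using nb[of e] by (auto simp: circ_chain_def orev_def)
    have "qf E (circ_chain (set ws)) = (\<Sum>a\<in>set ws. circ_chain (set ws) a)"
      unfolding qf_def by (rule circ_inner[OF finE CE nb cch])
    also have "\<dots> = (\<Sum>a\<in>set ws. 1)" by (rule sum.cong) (auto simp: circ_chain_def)
    finally have q1: "qf E (circ_chain (set ws)) = real (card (set ws))" by simp
    have "2 * (\<Sum>a\<in>set ws. vD a) = real (card (set ws))"
      using circ ic sD i1 q1 by metis
    moreover have "sum_list (map g ws) = (\<Sum>a\<in>set ws. g a)"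
      using dws by (rule sum_list_distinct_conv_sum_set)
    moreover have "(\<Sum>a\<in>set ws. g a) = 2 * (\<Sum>a\<in>set ws. vD a) - real (card (set ws))"
      unfolding g_def by (simp add: sum_subtractf sum_distrib_left)
    ultimately show ?thesis by simp
  qed
  have CW: "sum_list (map g ws) = 0" if "walk src tgt D x ws x" for ws x
  proof (rule closed_walk_sum[of src tgt D g])
    show "walk src tgt D x ws x" by (rule that)
  next
    fix ws' x' assume "ws' \<noteq> []" "walk src tgt D x' ws' x'" "distinct (map (otail src tgt) ws')"
    then show "sum_list (map g ws') = 0" by (rule H)
  qed
  have MR: "(ohead src tgt a, otail src tgt a) \<in> (dadj src tgt D)\<^sup>*" if a: "a \<in> D" for a
  proof -
    obtain e b where ab: "a = (e, b)" by (cases a)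
    have e0: "e \<in> E0" using fstD[OF a] ab by simp
    then have eV: "src e \<in> V" "tgt e \<in> V" using ends E0E by auto
    have "(ohead src tgt a, otail src tgt a) \<in> uadj E0 src tgt"
      using e0 ab unfolding uadj_def ohead_def otail_def by (cases b) auto
    moreover have "ohead src tgt a \<in> V" "otail src tgt a \<in> V"
      using eV ab unfolding ohead_def otail_def by auto
    ultimately show ?thesis using sc by blast
  qed
  obtain p where p: "\<forall>a\<in>D. g a = p (ohead src tgt a) - p (otail src tgt a)"
  proof -
    have "\<exists>p. \<forall>a\<in>D. g a = p (ohead src tgt a) - p (otail src tgt a)"
      by (rule potential_exists[of src tgt D g]) (simp_all add: CW MR)
    then show ?thesis using that by blast
  qed
  have bz: "vD (e, True) = 0" if "e \<in> E" "e \<notin> E0" for e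
    using bridge_zero[OF finV finE ends fl conn] that unfolding E0_def B_def by blast
  define d where "d e = p (tgt e) - p (src e)" for e
  have "(\<Sum>a\<in>D. vD a) = (\<Sum>e\<in>E0. \<Sum>a\<in>{a\<in>D. fst a = e}. vD a)"
  proof -
    have "fst ` D \<subseteq> E0" using fstD by auto
    then show ?thesis using sum.group[OF finD finE0, of fst vD] by simp
  qed
  also have "\<dots> = (\<Sum>e\<in>E0. vD (e, (e, True) \<in> D))"
  proof (rule sum.cong[OF refl])
    fix e assume e: "e \<in> E0"
    have mem: "(e, (e, True) \<in> D) \<in> D" using xo e by (cases "(e, True) \<in> D") auto
    have "{a\<in>D. fst a = e} = {(e, (e, True) \<in> D)}"
    proof (intro set_eqI iffI)
      fix a assume "a \<in> {a\<in>D. fst a = e}"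
      then show "a \<in> {(e, (e, True) \<in> D)}" using mem finj[of a "(e, (e, True) \<in> D)"] by auto
    qed (use mem in auto)
    then show "(\<Sum>a\<in>{a\<in>D. fst a = e}. vD a) = vD (e, (e, True) \<in> D)" by simp
  qed
  also have "\<dots> = (\<Sum>e\<in>E0. 2 * (vD (e, True) * vD (e, True)) - vD (e, True) * d e)"
  proof (rule sum.cong[OF refl])
    fix e assume e: "e \<in> E0"
    show "vD (e, (e, True) \<in> D) = 2 * (vD (e, True) * vD (e, True)) - vD (e, True) * d e"
    proof (cases "(e, True) \<in> D")
      case True
      then have "2 * vD (e, True) - 1 = d e" using p unfolding g_def d_def ohead_def otail_def by auto
      then have deq: "d e = 2 * vD (e, True) - 1" by simp
      show ?thesis using True unfolding deq by (simp add: algebra_simps)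
    next
      case False
      then have F: "(e, False) \<in> D" using xo e by auto
      then have "2 * vD (e, False) - 1 = - d e" using p unfolding g_def d_def ohead_def otail_def by auto
      moreover have vf: "vD (e, False) = - vD (e, True)" using chv e E0E by auto
      ultimately have "d e = 2 * vD (e, True) + 1" by simp
      then show ?thesis using False vf by (simp add: algebra_simps)
    qed
  qed
  also have "\<dots> = (\<Sum>e\<in>E. 2 * (vD (e, True) * vD (e, True)) - vD (e, True) * d e)"
    by (rule sum.mono_neutral_left[OF finE E0E]) (auto simp: bz)
  also have "\<dots> = 2 * qf E vD - (\<Sum>e\<in>E. vD (e, True) * d e)"
    unfolding qf_def inner_ch_def by (simp add: sum_subtractf sum_distrib_left)
  also have "(\<Sum>e\<in>E. vD (e, True) * d e) = 0"
    unfolding d_def by (rule flow_dp[OF finV finE ends fl])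
  finally show ?thesis by simp
qed

end
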